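(* Suppose there exist $i, d \ge 2$ such that $o(\alpha_d) + a_i \ge c_R$, $o(\alpha_d) < \infty$, and $o(\alpha_d) \le o(\alpha_i) \le \infty$. Then $R = k[[\widetilde{x}_1, \ldots, \widetilde{x}_n]]$ where $\widetilde{x}_j = x_j$ for $j \ne i$ and $\widetilde{x}_i = t^{a_i}$, and $\widetilde{x}_1,\ldots,\widetilde{x}_n$ are again Herzog–Kunz generators of $R$.
   Context: Let $k$ be an algebraically closed field of characteristic $0$ and let $(R,\mathfrak m)$ be a complete local noetherian domain of dimension $1$ containing $k$ with $R/\mathfrak m = k$; its normalization is $\overline R = k[[t]]$, $R \subseteq k[[t]]$ finite birational. Let $v$ be the $t$-adic valuation; for $A \subseteq k((t))$ let $v(A) = \{v(f): f\in A\setminus\{0\}\}$. The conductor is $\mathfrak C_R = \{x\in\overline R : x\overline R\subseteq R\} = t^{c_R}\overline R$, $c_R$ the conductor degree. The Herzog–Kunz sequence of $R$ is $v(\mathfrak m)\setminus v(\mathfrak m^2)$ listed increasingly as $a_1<\cdots<a_n$; Herzog–Kunz generators are $x_i \in R$ with $v(x_i)=a_i$ (these satisfy $R = k[[x_1,\ldots,x_n]]$). Fix Herzog–Kunz generators $x_1, \ldots, x_n$ with $x_1 = t^{a_1}$ and, for $i \ge 2$, $x_i = \alpha_i t^{a_i}$ with $\alpha_i \in k[[t]]$ a unit of constant term $1$. Define $o(\alpha_i) = v(\alpha_i - 1)$ (so $o(\alpha_i) = \infty$ if $\alpha_i = 1$). *)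

theory Defs
  imports "HOL-Computational_Algebra.Computational_Algebra" "HOL-Library.Extended_Nat"
begin

text \<open>k[[t]] is modelled as the type of formal power series over a field k;
 t = fps_X, the t-adic valuation of a nonzero f is subdegree f.\<close>

definition alg_closed_field :: "'a::field itself \<Rightarrow> bool" where
  "alg_closed_field _ \<longleftrightarrow> (\<forall>p::'a poly. degree p \<ge> 1 \<longrightarrow> (\<exists>z. poly p z = 0))"

definition k_subalg :: "'a::field fps set \<Rightarrow> bool" where
  "k_subalg S \<longleftrightarrow> (\<forall>c. fps_const c \<in> S) \<and> (\<forall>f\<in>S. \<forall>g\<in>S. f + g \<in> S \<and> f * g \<in> S)"

definition tadic_closed :: "'a::field fps set \<Rightarrow> bool" where
  "tadic_closed S \<longleftrightarrow> (\<forall>f. (\<forall>N. \<exists>g\<in>S. \<forall>j<N. f $ j = g $ j) \<longrightarrow> f \<in> S)"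

text \<open>k[[x_1,...,x_n]]: the smallest closed k-subalgebra of k[[t]] containing the x_i\<close>
definition gen_alg :: "'a::field fps set \<Rightarrow> 'a fps set" where
  "gen_alg X = \<Inter>{S. k_subalg S \<and> tadic_closed S \<and> X \<subseteq> S}"

definition conductor_exps :: "'a::field fps set \<Rightarrow> nat set" where
  "conductor_exps R = {c. \<forall>f. (\<forall>j<c. f $ j = 0) \<longrightarrow> f \<in> R}"

definition cond_deg :: "'a::field fps set \<Rightarrow> nat" where
  "cond_deg R = (LEAST c. c \<in> conductor_exps R)"

text \<open>Standing setup: R a k-subalgebra of k[[t]] of dimension 1 (R \<noteq> k) with
 k[[t]] finite birational over R, i.e. nonzero conductor.\<close>
definition curve_ring :: "'a::field fps set \<Rightarrow> bool" where
  "curve_ring R \<longleftrightarrow> k_subalg R \<and> tadic_closed R \<and> conductor_exps R \<noteq> {}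
      \<and> R \<noteq> range fps_const"

definition max_ideal :: "'a::field fps set \<Rightarrow> 'a fps set" where
  "max_ideal R = {f \<in> R. f $ 0 = 0}"

definition ideal_sq :: "'a::field fps set \<Rightarrow> 'a fps set" where
  "ideal_sq M = {f. \<exists>ps. set ps \<subseteq> M \<times> M \<and> f = sum_list (map (\<lambda>(a,b). a * b) ps)}"

definition vals :: "'a::field fps set \<Rightarrow> nat set" where
  "vals A = subdegree ` (A - {0})"

definition HK_set :: "'a::field fps set \<Rightarrow> nat set" where
  "HK_set R = vals (max_ideal R) - vals (ideal_sq (max_ideal R))"

text \<open>a_j (1-based): j-th element of the Herzog-Kunz sequence\<close>
definition hk :: "'a::field fps set \<Rightarrow> nat \<Rightarrow> nat" where
  "hk R j = sorted_list_of_set (HK_set R) ! (j - 1)"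

definition HK_gens :: "'a::field fps set \<Rightarrow> nat \<Rightarrow> (nat \<Rightarrow> 'a fps) \<Rightarrow> bool" where
  "HK_gens R n x \<longleftrightarrow> n = card (HK_set R) \<and>
     (\<forall>j\<in>{1..n}. x j \<in> R \<and> x j \<noteq> 0 \<and> subdegree (x j) = hk R j)"

definition ordm1 :: "'a::field fps \<Rightarrow> enat" where
  "ordm1 \<alpha> = (if \<alpha> = 1 then \<infinity> else enat (subdegree (\<alpha> - 1)))"

end

theory Submission imports Defs begin

lemma ksub_const: "k_subalg S \<Longrightarrow> fps_const c \<in> S" by (simp add: k_subalg_def)
lemma ksub_add: "k_subalg S \<Longrightarrow> f \<in> S \<Longrightarrow> g \<in> S \<Longrightarrow> f + g \<in> S" by (simp add: k_subalg_def)
lemma ksub_mult: "k_subalg S \<Longrightarrow> f \<in> S \<Longrightarrow> g \<in> S \<Longrightarrow> f * g \<in> S" by (simp add: k_subalg_def)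
lemma ksub_zero: "k_subalg S \<Longrightarrow> (0::'a::field fps) \<in> S"
  using ksub_const[of S 0] by simp
lemma ksub_diff: assumes "k_subalg S" "f \<in> S" "g \<in> S" shows "f - g \<in> S"
proof -
  have "fps_const (-1) * g \<in> S" using assms ksub_const ksub_mult by blast
  then have "f + fps_const (-1) * g \<in> S" using assms ksub_add by blast
  moreover have "f + fps_const (-1) * g = f - g"
    by (simp add: fps_const_neg[symmetric] del: fps_const_neg)
  ultimately show ?thesis by simp
qed
lemma ksub_smult: "k_subalg S \<Longrightarrow> f \<in> S \<Longrightarrow> fps_const c * f \<in> S"
  using ksub_const ksub_mult by blast

lemma ksub_sum: assumes "k_subalg S" "finite A" "\<And>a. a \<in> A \<Longrightarrow> h a \<in> S"
  shows "(\<Sum>a\<in>A. h a) \<in> S"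
  using assms(2,3)
proof (induction A rule: finite_induct)
  case empty then show ?case using ksub_zero[OF assms(1)] by simp
next
  case (insert x F) then show ?case using ksub_add[OF assms(1)] by simp
qed

lemma gen_alg_props:
  shows "k_subalg (gen_alg X)" "tadic_closed (gen_alg X)" "X \<subseteq> gen_alg X"
proof -
  show "k_subalg (gen_alg X)" unfolding k_subalg_def gen_alg_def by auto
  show "X \<subseteq> gen_alg X" unfolding gen_alg_def by auto
  show "tadic_closed (gen_alg X)" unfolding tadic_closed_def
  proof (intro allI impI)
    fix f assume h: "\<forall>N. \<exists>g\<in>gen_alg X. \<forall>j<N. f $ j = g $ j"
    show "f \<in> gen_alg X" unfolding gen_alg_def
    proof
      fix T assume T: "T \<in> {S. k_subalg S \<and> tadic_closed S \<and> X \<subseteq> S}"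
      then have "gen_alg X \<subseteq> T" unfolding gen_alg_def by auto
      then have "\<forall>N. \<exists>g\<in>T. \<forall>j<N. f $ j = g $ j" using h by blast
      then show "f \<in> T" using T unfolding tadic_closed_def by blast
    qed
  qed
qed

lemma gen_alg_least: "k_subalg S \<Longrightarrow> tadic_closed S \<Longrightarrow> X \<subseteq> S \<Longrightarrow> gen_alg X \<subseteq> S"
  unfolding gen_alg_def by auto

lemma zb_mult:
  fixes u v :: "'a::field fps"
  assumes "\<forall>j<N. u $ j = 0" "v $ 0 = 0"
  shows "\<forall>j<Suc N. (u * v) $ j = 0"
proof (intro allI impI)
  fix j assume j: "j < Suc N"
  have "(u * v) $ j = (\<Sum>i=0..j. u$i * v$(j - i))" by (rule fps_mult_nth)
  also have "\<dots> = 0"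
  proof (rule sum.neutral, intro ballI)
    fix i assume i: "i \<in> {0..j}"
    show "u$i * v$(j - i) = 0"
    proof (cases "i < N")
      case True then show ?thesis using assms(1) by simp
    next
      case False then have "i = j" using i j by auto
      then show ?thesis using assms(2) by simp
    qed
  qed
  finally show "(u * v) $ j = 0" .
qed

lemma subdeg_eq:
  fixes f :: "'a::field fps"
  assumes "\<forall>j<s. f $ j = 0" "f $ s \<noteq> 0" shows "subdegree f = s"
  using assms by (intro subdegreeI) auto

lemma m2_zero: "0 \<in> ideal_sq M"
  unfolding ideal_sq_def by (rule CollectI, rule exI[of _ "[]"]) simp

lemma m2_single: "a \<in> M \<Longrightarrow> b \<in> M \<Longrightarrow> a * b \<in> ideal_sq M"
  unfolding ideal_sq_def by (rule CollectI, rule exI[of _ "[(a,b)]"]) simp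

lemma m2_add: assumes "a \<in> ideal_sq M" "b \<in> ideal_sq M" shows "a + b \<in> ideal_sq M"
proof -
  obtain ps qs where "set ps \<subseteq> M \<times> M" "a = sum_list (map (\<lambda>(a,b). a * b) ps)"
     "set qs \<subseteq> M \<times> M" "b = sum_list (map (\<lambda>(a,b). a * b) qs)"
    using assms unfolding ideal_sq_def by auto
  then show ?thesis unfolding ideal_sq_def
    by (intro CollectI exI[of _ "ps @ qs"]) auto
qed

lemma sum_list_smult:
  fixes e :: "'a::field"
  shows "sum_list (map (\<lambda>(a,b). a * b) (map (\<lambda>(a,b). (fps_const e * a, b)) ps))
   = fps_const e * sum_list (map (\<lambda>(a,b). a * b) ps)"
  by (induction ps) (auto simp: algebra_simps o_def)

lemma max_ideal_smult: "k_subalg R \<Longrightarrow> a \<in> max_ideal R \<Longrightarrow> fps_const e * a \<in> max_ideal R"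
  unfolding max_ideal_def using ksub_smult by auto

lemma max_ideal_mult: "k_subalg R \<Longrightarrow> a \<in> max_ideal R \<Longrightarrow> b \<in> max_ideal R \<Longrightarrow> a * b \<in> max_ideal R"
  unfolding max_ideal_def using ksub_mult by auto

lemma max_ideal_add: "k_subalg R \<Longrightarrow> a \<in> max_ideal R \<Longrightarrow> b \<in> max_ideal R \<Longrightarrow> a + b \<in> max_ideal R"
  unfolding max_ideal_def using ksub_add by auto

lemma max_ideal_diff: "k_subalg R \<Longrightarrow> a \<in> max_ideal R \<Longrightarrow> b \<in> max_ideal R \<Longrightarrow> a - b \<in> max_ideal R"
  unfolding max_ideal_def using ksub_diff by auto

lemma m2_smult: assumes "k_subalg R" "a \<in> ideal_sq (max_ideal R)"
  shows "fps_const e * a \<in> ideal_sq (max_ideal R)"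
proof -
  obtain ps where ps: "set ps \<subseteq> max_ideal R \<times> max_ideal R" "a = sum_list (map (\<lambda>(a,b). a * b) ps)"
    using assms unfolding ideal_sq_def by auto
  have "set (map (\<lambda>(a,b). (fps_const e * a, b)) ps) \<subseteq> max_ideal R \<times> max_ideal R"
    using ps(1) max_ideal_smult[OF assms(1)] by auto
  then show ?thesis unfolding ideal_sq_def using ps(2) sum_list_smult[of e ps]
    by (intro CollectI exI[of _ "map (\<lambda>(a,b). (fps_const e * a, b)) ps"]) auto
qed

lemma m2_sub: assumes "k_subalg R" shows "ideal_sq (max_ideal R) \<subseteq> max_ideal R"
proof
  fix f assume "f \<in> ideal_sq (max_ideal R)"
  then obtain ps where ps: "set ps \<subseteq> max_ideal R \<times> max_ideal R" "f = sum_list (map (\<lambda>(a,b). a * b) ps)"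
    unfolding ideal_sq_def by auto
  have "set ps \<subseteq> max_ideal R \<times> max_ideal R \<Longrightarrow> sum_list (map (\<lambda>(a,b). a * b) ps) \<in> max_ideal R"
  proof (induction ps)
    case Nil then show ?case using ksub_zero[OF assms] by (simp add: max_ideal_def)
  next
    case (Cons p ps) then show ?case
      using max_ideal_add[OF assms] max_ideal_mult[OF assms] by (cases p) auto
  qed
  then show "f \<in> max_ideal R" using ps by simp
qed

lemma max_ideal_subdeg: "f \<in> max_ideal R \<Longrightarrow> f \<noteq> 0 \<Longrightarrow> subdegree f \<ge> 1"
  unfolding max_ideal_def using subdegree_eq_0_iff[of f] by auto

lemma shift_eq: fixes g :: "'a::field fps" assumes "\<forall>j<c. g $ j = 0"
  shows "g = fps_X ^ c * fps_shift c g"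
  using assms by (intro fps_ext) (auto simp: fps_X_power_mult_nth)

lemma cond_bound:
  fixes R :: "'a::field fps set"
  assumes "curve_ring R"
  shows "\<exists>C\<ge>1. (\<forall>g. (\<forall>j<C. g$j=0) \<longrightarrow> g \<in> max_ideal R)
           \<and> (\<forall>g. (\<forall>j<2*C. g$j=0) \<longrightarrow> g \<in> ideal_sq (max_ideal R))"
proof -
  obtain c0 where c0: "c0 \<in> conductor_exps R" using assms unfolding curve_ring_def by auto
  define C where "C = Suc c0"
  have A: "\<forall>g. (\<forall>j<C. g$j=0) \<longrightarrow> g \<in> max_ideal R"
  proof (intro allI impI)
    fix g :: "'a fps" assume g: "\<forall>j<C. g$j=0"
    then have "g \<in> R" using c0 unfolding conductor_exps_def C_def by auto
    moreover have "g $ 0 = 0" using g C_def by auto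
    ultimately show "g \<in> max_ideal R" unfolding max_ideal_def by auto
  qed
  have B: "\<forall>g. (\<forall>j<2*C. g$j=0) \<longrightarrow> g \<in> ideal_sq (max_ideal R)"
  proof (intro allI impI)
    fix g :: "'a fps" assume g: "\<forall>j<2*C. g$j=0"
    then have "\<forall>j<C. g$j=0" by auto
    then have e: "g = fps_X ^ C * fps_shift C g" by (rule shift_eq)
    have "fps_X ^ C \<in> max_ideal R" using A by auto
    moreover have "fps_shift C g \<in> max_ideal R" using A g by auto
    ultimately show "g \<in> ideal_sq (max_ideal R)" using e m2_single by metis
  qed
  have "C \<ge> 1" using C_def by simp
  then show ?thesis using A B by blast
qed

lemma HK_finite:
  fixes R :: "'a::field fps set"
  assumes "curve_ring R"
  shows "finite (HK_set R)"
proof -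
  obtain C where C: "\<forall>g. (\<forall>j<2*C. g$j=0) \<longrightarrow> g \<in> ideal_sq (max_ideal R)"
    using cond_bound[OF assms] by auto
  have "HK_set R \<subseteq> {..<2*C}"
  proof
    fix v assume v: "v \<in> HK_set R"
    show "v \<in> {..<2*C}"
    proof (rule ccontr)
      assume "v \<notin> {..<2*C}"
      then have "(fps_X ^ v :: 'a fps) \<in> ideal_sq (max_ideal R)" using C by auto
      moreover have "(fps_X ^ v :: 'a fps) \<noteq> 0" by simp
      ultimately have "v \<in> vals (ideal_sq (max_ideal R))" unfolding vals_def
        using fps_X_power_subdegree[of v] by (metis DiffI image_eqI singletonD)
      then show False using v unfolding HK_set_def by blast
    qed
  qed
  then show ?thesis using finite_subset by blast
qed

lemma hk_index:
  fixes R :: "'a::field fps set"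
  assumes "curve_ring R" "HK_gens R n y" "s \<in> HK_set R"
  shows "\<exists>j\<in>{1..n}. hk R j = s"
proof -
  let ?l = "sorted_list_of_set (HK_set R)"
  have "set ?l = HK_set R" "length ?l = n"
    using HK_finite[OF assms(1)] assms(2) unfolding HK_gens_def by auto
  then obtain p where "p < n" "?l ! p = s" using assms(3) by (metis in_set_conv_nth)
  then show ?thesis unfolding hk_def by (intro bexI[of _ "Suc p"]) auto
qed

lemma lin_upd:
  fixes y :: "nat \<Rightarrow> 'a::field fps"
  assumes "j0 \<in> {1..n}"
  shows "(\<Sum>j\<in>{1..n}. fps_const ((c(j0 := c j0 + e)) j) * y j)
       = (\<Sum>j\<in>{1..n}. fps_const (c j) * y j) + fps_const e * y j0"
proof -
  have "(\<Sum>j\<in>{1..n}. fps_const ((c(j0 := c j0 + e)) j) * y j)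
     = (\<Sum>j\<in>{1..n}. fps_const (c j) * y j + (if j = j0 then fps_const e * y j else 0))"
    by (rule sum.cong) (auto simp: algebra_simps fps_const_add[symmetric] simp del: fps_const_add)
  also have "\<dots> = (\<Sum>j\<in>{1..n}. fps_const (c j) * y j) + fps_const e * y j0"
    using assms by (simp add: sum.distrib)
  finally show ?thesis .
qed

lemma hk_in:
  fixes R :: "'a::field fps set"
  assumes "curve_ring R" "HK_gens R n y" "j \<in> {1..n}"
  shows "hk R j \<in> HK_set R"
proof -
  let ?l = "sorted_list_of_set (HK_set R)"
  have "set ?l = HK_set R" "length ?l = n"
    using HK_finite[OF assms(1)] assms(2) unfolding HK_gens_def by auto
  moreover have "j - 1 < n" using assms(3) by auto
  ultimately have "?l ! (j - 1) \<in> set ?l" using nth_mem[of "j - 1" ?l] by simp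
  then show ?thesis unfolding hk_def using \<open>set ?l = HK_set R\<close> by simp
qed

lemma gen_in_m:
  fixes R :: "'a::field fps set"
  assumes cr: "curve_ring R" and hg: "HK_gens R n y" and j: "j \<in> {1..n}"
  shows "y j \<in> max_ideal R"
proof -
  have hs: "hk R j \<in> HK_set R" by (rule hk_in[OF cr hg j])
  have "hk R j \<in> vals (max_ideal R)" using hs by (simp add: HK_set_def)
  then obtain g where g0: "hk R j = subdegree g" "g \<in> max_ideal R - {0}" unfolding vals_def by (rule imageE)
  then have g: "g \<in> max_ideal R" "g \<noteq> 0" "subdegree g = hk R j" by auto
  have h1: "hk R j \<ge> 1" using max_ideal_subdeg[of g R] g by simp
  have yR: "y j \<in> R" and sd: "subdegree (y j) = hk R j" using hg j by (auto simp: HK_gens_def)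
  have "y j $ 0 = 0" using sd h1 by (intro nth_less_subdegree_zero) simp
  then show ?thesis using yR by (simp add: max_ideal_def)
qed

lemma decomp:
  fixes R :: "'a::field fps set"
  assumes cr: "curve_ring R" and hg: "HK_gens R n y" and f: "f \<in> max_ideal R"
  shows "\<exists>c. f - (\<Sum>j\<in>{1..n}. fps_const (c j) * y j) \<in> ideal_sq (max_ideal R)"
proof -
  have ks: "k_subalg R" using cr unfolding curve_ring_def by auto
  obtain C where C: "\<forall>g. (\<forall>j<2*C. g$j=0) \<longrightarrow> g \<in> ideal_sq (max_ideal R)"
    using cond_bound[OF cr] by auto
  define B where "B = 2*C"
  have main: "\<forall>f\<in>max_ideal R. (\<forall>j<B-k. f$j=0) \<longrightarrow>
     (\<exists>c. f - (\<Sum>j\<in>{1..n}. fps_const (c j) * y j) \<in> ideal_sq (max_ideal R))" for k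
  proof (induction k)
    case 0
    show ?case
    proof (intro ballI impI)
      fix f assume "f \<in> max_ideal R" "\<forall>j<B-0. f$j=0"
      then have "f \<in> ideal_sq (max_ideal R)" using C B_def by auto
      then show "\<exists>c. f - (\<Sum>j\<in>{1..n}. fps_const (c j) * y j) \<in> ideal_sq (max_ideal R)"
        by (intro exI[of _ "\<lambda>_. 0"]) simp
    qed
  next
    case (Suc k)
    show ?case
    proof (intro ballI impI)
      fix f assume fm: "f \<in> max_ideal R" and fz: "\<forall>j<B - Suc k. f$j=0"
      show "\<exists>c. f - (\<Sum>j\<in>{1..n}. fps_const (c j) * y j) \<in> ideal_sq (max_ideal R)"
      proof (cases "B \<le> k")
        case True then have "\<forall>j<B-k. f$j=0" by simp
        then show ?thesis using Suc.IH fm by blast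
      next
        case False
        define s where "s = B - Suc k"
        have sk: "B - k = Suc s" using False s_def by simp
        show ?thesis
        proof (cases "f $ s = 0")
          case True
          have "\<forall>j<B-k. f$j=0"
          proof (intro allI impI)
            fix j assume "j < B - k"
            then have "j < s \<or> j = s" using sk by linarith
            then show "f $ j = 0" using fz True s_def by auto
          qed
          then show ?thesis using Suc.IH fm by blast
        next
          case fs: False
          have fnz: "f \<noteq> 0" using fs by auto
          have sdf: "subdegree f = s" using fz fs s_def by (intro subdegreeI) auto
          have "s \<in> vals (max_ideal R)" unfolding vals_def using fm fnz sdf by (intro image_eqI[of _ _ f]) auto
          show ?thesis
          proof (cases "s \<in> vals (ideal_sq (max_ideal R))")
            case True
            then obtain h where h0: "h \<in> ideal_sq (max_ideal R) - {0}" "subdegree h = s"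
              unfolding vals_def by blast
            then have h: "h \<in> ideal_sq (max_ideal R)" "h \<noteq> 0" "subdegree h = s" by auto
            define e where "e = f $ s / h $ s"
            define f' where "f' = f - fps_const e * h"
            have hs: "h $ s \<noteq> 0" using h by auto
            have hm: "h \<in> max_ideal R" using h m2_sub[OF ks] by auto
            have f'm: "f' \<in> max_ideal R" unfolding f'_def
              by (rule max_ideal_diff[OF ks fm max_ideal_smult[OF ks hm]])
            have "\<forall>j<B-k. f'$j=0"
            proof (intro allI impI)
              fix j assume "j < B - k"
              then have "j < s \<or> j = s" using sk by linarith
              then show "f' $ j = 0"
              proof
                assume js: "j < s"
                then have "f $ j = 0" using fz s_def by simp
                moreover have "h $ j = 0" using js h(3) nth_less_subdegree_zero[of j h] by simp
                ultimately show ?thesis unfolding f'_def by simp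
              next
                assume "j = s" then show ?thesis unfolding f'_def e_def using hs by simp
              qed
            qed
            then obtain c where c: "f' - (\<Sum>j\<in>{1..n}. fps_const (c j) * y j) \<in> ideal_sq (max_ideal R)"
              using Suc.IH f'm by blast
            have "f - (\<Sum>j\<in>{1..n}. fps_const (c j) * y j) =
                  (f' - (\<Sum>j\<in>{1..n}. fps_const (c j) * y j)) + fps_const e * h"
              unfolding f'_def by simp
            also have "\<dots> \<in> ideal_sq (max_ideal R)" using c m2_add m2_smult[OF ks h(1)] by blast
            finally show ?thesis by blast
          next
            case False
            then have "s \<in> HK_set R" using \<open>s \<in> vals (max_ideal R)\<close> unfolding HK_set_def by blast
            then obtain j0 where j0: "j0 \<in> {1..n}" "hk R j0 = s" using hk_index[OF cr hg] by blast
            have y0: "y j0 \<noteq> 0" "subdegree (y j0) = s" using hg j0 by (auto simp: HK_gens_def)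
            define e where "e = f $ s / y j0 $ s"
            define f' where "f' = f - fps_const e * y j0"
            have hs: "y j0 $ s \<noteq> 0" using y0 by auto
            have f'm: "f' \<in> max_ideal R" unfolding f'_def
              by (rule max_ideal_diff[OF ks fm max_ideal_smult[OF ks gen_in_m[OF cr hg j0(1)]]])
            have "\<forall>j<B-k. f'$j=0"
            proof (intro allI impI)
              fix j assume "j < B - k"
              then have "j < s \<or> j = s" using sk by linarith
              then show "f' $ j = 0"
              proof
                assume js: "j < s"
                then have "f $ j = 0" using fz s_def by simp
                moreover have "(y j0) $ j = 0" using js y0(2) nth_less_subdegree_zero[of j "y j0"] by simp
                ultimately show ?thesis unfolding f'_def by simp
              next
                assume "j = s" then show ?thesis unfolding f'_def e_def using hs by simp
              qed
            qed
            then obtain c where c: "f' - (\<Sum>j\<in>{1..n}. fps_const (c j) * y j) \<in> ideal_sq (max_ideal R)"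
              using Suc.IH f'm by blast
            have "f - (\<Sum>j\<in>{1..n}. fps_const ((c(j0 := c j0 + e)) j) * y j) =
                  f' - (\<Sum>j\<in>{1..n}. fps_const (c j) * y j)"
              unfolding f'_def lin_upd[OF j0(1)] by simp
            then show ?thesis using c by (intro exI[of _ "c(j0 := c j0 + e)"]) simp
          qed
        qed
      qed
    qed
  qed
  have "\<forall>j<B-B. f$j = 0" by simp
  then show ?thesis using main[of B] f by blast
qed

lemma approx:
  fixes R S :: "'a::field fps set"
  assumes cr: "curve_ring R" and hg: "HK_gens R n y" and kS: "k_subalg S"
    and yS: "\<forall>j\<in>{1..n}. y j \<in> S"
  shows "\<forall>f\<in>max_ideal R. \<exists>g\<in>S. \<forall>j<Suc N. (f - g) $ j = 0"
proof (induction N)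
  case 0
  show ?case
  proof
    fix f assume "f \<in> max_ideal R"
    then have "f $ 0 = 0" by (simp add: max_ideal_def)
    then show "\<exists>g\<in>S. \<forall>j<Suc 0. (f - g) $ j = 0" using ksub_zero[OF kS] by (intro bexI[of _ 0]) auto
  qed
next
  case (Suc N)
  have ps_claim: "set ps \<subseteq> max_ideal R \<times> max_ideal R \<Longrightarrow>
     \<exists>g\<in>S. \<forall>j<Suc (Suc N). (sum_list (map (\<lambda>(a,b). a * b) ps) - g) $ j = 0" for ps
  proof (induction ps)
    case Nil then show ?case using ksub_zero[OF kS] by (intro bexI[of _ 0]) auto
  next
    case (Cons p ps)
    obtain a b where p: "p = (a,b)" by (cases p)
    have am: "a \<in> max_ideal R" and bm: "b \<in> max_ideal R" using Cons.prems p by auto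
    obtain g' where g': "g' \<in> S" "\<forall>j<Suc (Suc N). (sum_list (map (\<lambda>(a,b). a * b) ps) - g') $ j = 0"
      using Cons by auto
    obtain ga where ga: "ga \<in> S" "\<forall>j<Suc N. (a - ga) $ j = 0" using Suc.IH am by blast
    obtain gb where gb: "gb \<in> S" "\<forall>j<Suc N. (b - gb) $ j = 0" using Suc.IH bm by blast
    have a0: "a $ 0 = 0" and b0: "b $ 0 = 0" using am bm by (auto simp: max_ideal_def)
    have "(a - ga) $ 0 = 0" using ga(2) by blast
    then have ga0: "ga $ 0 = 0" using a0 by simp
    have z1: "\<forall>j<Suc (Suc N). ((a - ga) * b) $ j = 0" by (rule zb_mult[OF ga(2) b0])
    have z2: "\<forall>j<Suc (Suc N). ((b - gb) * ga) $ j = 0" by (rule zb_mult[OF gb(2) ga0])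
    have eq: "sum_list (map (\<lambda>(a,b). a * b) (p # ps)) - (ga * gb + g')
       = (a - ga) * b + (b - gb) * ga + (sum_list (map (\<lambda>(a,b). a * b) ps) - g')"
      unfolding p by (simp add: algebra_simps)
    have "ga * gb + g' \<in> S" using ksub_add[OF kS ksub_mult[OF kS ga(1) gb(1)] g'(1)] .
    moreover have "\<forall>j<Suc (Suc N). (sum_list (map (\<lambda>(a,b). a * b) (p # ps)) - (ga * gb + g')) $ j = 0"
      unfolding eq using z1 z2 g'(2) by simp
    ultimately show ?case by blast
  qed
  show ?case
  proof
    fix f assume fm: "f \<in> max_ideal R"
    obtain c where c: "f - (\<Sum>j\<in>{1..n}. fps_const (c j) * y j) \<in> ideal_sq (max_ideal R)"
      using decomp[OF cr hg fm] by blast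
    then obtain ps where ps: "set ps \<subseteq> max_ideal R \<times> max_ideal R"
      "f - (\<Sum>j\<in>{1..n}. fps_const (c j) * y j) = sum_list (map (\<lambda>(a,b). a * b) ps)"
      unfolding ideal_sq_def by blast
    obtain g where g: "g \<in> S" "\<forall>j<Suc (Suc N). (sum_list (map (\<lambda>(a,b). a * b) ps) - g) $ j = 0"
      using ps_claim[OF ps(1)] by blast
    have lS: "(\<Sum>j\<in>{1..n}. fps_const (c j) * y j) \<in> S"
      using yS by (intro ksub_sum[OF kS]) (auto intro: ksub_smult[OF kS])
    have "(\<Sum>j\<in>{1..n}. fps_const (c j) * y j) + g \<in> S" by (rule ksub_add[OF kS lS g(1)])
    moreover have "f - ((\<Sum>j\<in>{1..n}. fps_const (c j) * y j) + g) = sum_list (map (\<lambda>(a,b). a * b) ps) - g"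
      using ps(2) by (simp add: algebra_simps)
    ultimately show "\<exists>g\<in>S. \<forall>j<Suc (Suc N). (f - g) $ j = 0" using g(2) by metis
  qed
qed

lemma HK_generates:
  fixes R S :: "'a::field fps set"
  assumes cr: "curve_ring R" and hg: "HK_gens R n y" and kS: "k_subalg S" and tS: "tadic_closed S"
    and yS: "\<forall>j\<in>{1..n}. y j \<in> S"
  shows "R \<subseteq> S"
proof
  fix f assume fR: "f \<in> R"
  have ks: "k_subalg R" using cr unfolding curve_ring_def by auto
  define f0 where "f0 = f - fps_const (f $ 0)"
  have "f0 \<in> R" unfolding f0_def by (rule ksub_diff[OF ks fR ksub_const[OF ks]])
  moreover have "f0 $ 0 = 0" unfolding f0_def by simp
  ultimately have f0m: "f0 \<in> max_ideal R" by (simp add: max_ideal_def)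
  have "\<exists>g\<in>S. \<forall>j<N. f $ j = g $ j" for N
  proof -
    obtain g where g: "g \<in> S" "\<forall>j<Suc N. (f0 - g) $ j = 0"
      using approx[OF cr hg kS yS] f0m by blast
    have "fps_const (f $ 0) + g \<in> S" by (rule ksub_add[OF kS ksub_const[OF kS] g(1)])
    moreover have "\<forall>j<N. f $ j = (fps_const (f $ 0) + g) $ j"
    proof (intro allI impI)
      fix j assume "j < N"
      then have "(f0 - g) $ j = 0" using g(2) by simp
      then show "f $ j = (fps_const (f $ 0) + g) $ j" unfolding f0_def by (cases j) auto
    qed
    ultimately show ?thesis by blast
  qed
  then show "f \<in> S" using tS unfolding tadic_closed_def by blast
qed

theorem mainTheorem9:
  fixes R :: "'a::field_char_0 fps set" and x \<alpha> :: "nat \<Rightarrow> 'a fps" and n i d :: nat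
  assumes "alg_closed_field TYPE('a)"
    and "curve_ring R"
    and "HK_gens R n x"
    and "x 1 = fps_X ^ hk R 1"
    and "\<forall>j\<in>{2..n}. \<alpha> j $ 0 = 1 \<and> x j = \<alpha> j * fps_X ^ hk R j"
    and "2 \<le> i" "i \<le> n" "2 \<le> d" "d \<le> n"
    and "ordm1 (\<alpha> d) + enat (hk R i) \<ge> enat (cond_deg R)"
    and "ordm1 (\<alpha> d) < \<infinity>"
    and "ordm1 (\<alpha> d) \<le> ordm1 (\<alpha> i)"
  shows "R = gen_alg ((x(i := fps_X ^ hk R i)) ` {1..n})
       \<and> HK_gens R n (x(i := fps_X ^ hk R i))"
proof -
  note cr = assms(2) and hg = assms(3)
  have ks: "k_subalg R" and tR: "tadic_closed R" and cne: "conductor_exps R \<noteq> {}"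
    using cr unfolding curve_ring_def by auto
  define Xi :: "'a fps" where "Xi = fps_X ^ hk R i"
  define x' where "x' = x(i := Xi)"
  have i1: "i \<in> {1..n}" and i2: "i \<in> {2..n}" using assms(6,7) by auto
  have xi: "x i = \<alpha> i * Xi" using assms(5) i2 Xi_def by blast
  have xiR: "x i \<in> R" using hg i1 by (auto simp: HK_gens_def)
  have cc: "cond_deg R \<in> conductor_exps R" unfolding cond_deg_def
    using cne by (metis LeastI ex_in_conv)
  obtain od where od: "ordm1 (\<alpha> d) = enat od" using assms(11) by (cases "ordm1 (\<alpha> d)") auto
  have c_le: "cond_deg R \<le> od + hk R i" using assms(10) od by simp
  have XiR: "Xi \<in> R"
  proof (cases "\<alpha> i = 1")
    case True then show ?thesis using xi xiR by simp
  next
    case False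
    define oa where "oa = subdegree (\<alpha> i - 1)"
    have "enat od \<le> enat oa" using assms(12) od False unfolding ordm1_def oa_def by simp
    then have oo: "cond_deg R \<le> oa + hk R i" using c_le by simp
    define r where "r = (\<alpha> i - 1) * Xi"
    have "\<forall>j<cond_deg R. r $ j = 0"
    proof (intro allI impI)
      fix j assume j: "j < cond_deg R"
      show "r $ j = 0"
      proof (cases "j < hk R i")
        case True then show ?thesis unfolding r_def Xi_def by (simp add: fps_X_power_mult_right_nth)
      next
        case False
        then have "j - hk R i < oa" using j oo by linarith
        then have "(\<alpha> i - 1) $ (j - hk R i) = 0" unfolding oa_def by (rule nth_less_subdegree_zero)
        then show ?thesis unfolding r_def Xi_def by (simp add: fps_X_power_mult_right_nth)
      qed
    qed
    then have rR: "r \<in> R" using cc unfolding conductor_exps_def by blast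
    have "Xi = x i - r" unfolding r_def xi by (simp add: algebra_simps)
    then show ?thesis using ksub_diff[OF ks xiR rR] by simp
  qed
  have hg': "HK_gens R n x'"
    unfolding HK_gens_def
  proof (rule conjI)
    show "n = card (HK_set R)" using hg by (simp add: HK_gens_def)
  next
    show "\<forall>j\<in>{1..n}. x' j \<in> R \<and> x' j \<noteq> 0 \<and> subdegree (x' j) = hk R j"
    proof
    fix j assume j: "j \<in> {1..n}"
    show "x' j \<in> R \<and> x' j \<noteq> 0 \<and> subdegree (x' j) = hk R j"
    proof (cases "j = i")
      case True then show ?thesis using XiR unfolding x'_def Xi_def by (simp add: fps_X_power_subdegree)
    next
      case False then show ?thesis using hg j unfolding x'_def HK_gens_def by simp
    qed
    qed
  qed
  define S where "S = gen_alg (x' ` {1..n})"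
  have "R \<subseteq> S"
    using HK_generates[OF cr hg' gen_alg_props(1) gen_alg_props(2)] gen_alg_props(3)
    unfolding S_def by blast
  moreover have "S \<subseteq> R" unfolding S_def
    using hg' by (intro gen_alg_least[OF ks tR]) (auto simp: HK_gens_def)
  ultimately have "R = S" by blast
  then show ?thesis using hg' unfolding S_def x'_def Xi_def by simp
qed

end
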